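(* Let $K_d=[0,1]^d$ and let $(Y_n)_{n\ge1}$ be jointly measurable random fields $Y_n:\Omega\times K_d\to\mathbb R^d$, with $\mu_n(B)=\lambda_d(\{z\in K_d:Y_n(z)\in B\})$. Assume that for $\lambda_d$-a.e. $z$ the law of $Y_n(z)$ converges weakly to a probability measure $\mu_z$ (with $z\mapsto\mu_z(B)$ measurable), and define $\mu(B)=\int_{K_d}\mu_z(B)\,dz$. Let $\mathcal C$ be a countable convergence-determining class of Borel subsets of $\mathbb R^d$, and let $(\sigma(n))$ be a subsequence such that for every $B\in\mathcal C$ with $\mu(\partial B)=0$, $$\sum_{n\ge1}\int_{K_d}\int_{K_d}\mathrm{cov}\big(\mathbf 1_{\{Y_{\sigma(n)}(z)\in B\}},\mathbf 1_{\{Y_{\sigma(n)}(\zeta)\in B\}}\big)\,dz\,d\zeta<\infty.$$ Then almost surely $\mu_{\sigma(n)}\Rightarrow\mu$.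
   Context: A class $\mathcal C$ of Borel sets of $\mathbb R^d$ is convergence-determining if for probability measures $\nu_n,\nu$, convergence $\nu_n(B)\to\nu(B)$ for all $B\in\mathcal C$ with $\nu(\partial B)=0$ implies $\nu_n\Rightarrow\nu$ (such countable classes exist in $\mathbb R^d$). $\mathrm{cov}(U,V)=\mathbb E(UV)-\mathbb E U\,\mathbb E V$. *)

theory Defs
  imports "HOL-Probability.Probability"
begin

definition weak_conv_e :: "(nat \<Rightarrow> 'b::euclidean_space measure) \<Rightarrow> 'b measure \<Rightarrow> bool" where
  "weak_conv_e Ns N \<longleftrightarrow>
     (\<forall>f :: 'b \<Rightarrow> real. continuous_on UNIV f \<and> bounded (range f) \<longrightarrow>
        (\<lambda>n. integral\<^sup>L (Ns n) f) \<longlonglongrightarrow> integral\<^sup>L N f)"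

definition convergence_determining :: "'b::euclidean_space set set \<Rightarrow> bool" where
  "convergence_determining C \<longleftrightarrow> C \<subseteq> sets borel \<and>
     (\<forall>(Ns :: nat \<Rightarrow> 'b measure) (N :: 'b measure).
        (\<forall>n. prob_space (Ns n) \<and> sets (Ns n) = sets borel) \<and>
        prob_space N \<and> sets N = sets borel \<and>
        (\<forall>B\<in>C. measure N (frontier B) = 0 \<longrightarrow> (\<lambda>n. measure (Ns n) B) \<longlonglongrightarrow> measure N B)
        \<longrightarrow> weak_conv_e Ns N)"

definition unit_cube :: "(real^'d) set" where
  "unit_cube = {x. \<forall>i. 0 \<le> x $ i \<and> x $ i \<le> 1}"

definition mixture :: "(real^'d \<Rightarrow> (real^'d) measure) \<Rightarrow> (real^'d) measure" where
  "mixture mu = measure_of UNIV (sets borel)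
      (\<lambda>B. \<integral>\<^sup>+ z. indicator unit_cube z * emeasure (mu z) B \<partial>lborel)"

text \<open>Empirical random measure mu_n(omega)(B) = lambda_d({z in K_d. Y_n(omega,z) in B}).\<close>
definition occupation :: "(real^'d \<Rightarrow> real^'d) \<Rightarrow> (real^'d) measure" where
  "occupation y = distr (restrict_space lborel unit_cube) borel y"

definition ind_cov :: "'a measure \<Rightarrow> ('a \<Rightarrow> real^'d \<Rightarrow> real^'d) \<Rightarrow> (real^'d) set
                      \<Rightarrow> real^'d \<Rightarrow> real^'d \<Rightarrow> real" where
  "ind_cov M Y B z \<zeta> =
     measure M {\<omega>\<in>space M. Y \<omega> z \<in> B \<and> Y \<omega> \<zeta> \<in> B}
     - measure M {\<omega>\<in>space M. Y \<omega> z \<in> B} * measure M {\<omega>\<in>space M. Y \<omega> \<zeta> \<in> B}"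

end

theory Submission
  imports Defs
begin


lemma int_abs_le1:
  fixes f :: "'a \<Rightarrow> real"
  assumes "prob_space M" "\<And>x. \<bar>f x\<bar> \<le> 1"
  shows "\<bar>integral\<^sup>L M f\<bar> \<le> 1"
proof (cases "integrable M f")
  case True
  interpret prob_space M by fact
  have "\<bar>integral\<^sup>L M f\<bar> \<le> integral\<^sup>L M (\<lambda>x. \<bar>f x\<bar>)"
    using integral_norm_bound[of M f] by simp
  also have "\<dots> \<le> integral\<^sup>L M (\<lambda>x. 1)"
    using True assms(2) by (intro integral_mono) auto
  finally show ?thesis using prob_space by simp
next
  case False then show ?thesis by (simp add: not_integrable_integral_eq)
qed

lemma bdd_integrable:
  fixes f :: "'a \<Rightarrow> real"
  assumes "prob_space M" "f \<in> borel_measurable M" "\<And>x. \<bar>f x\<bar> \<le> c"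
  shows "integrable M f"
proof -
  interpret prob_space M by fact
  show ?thesis using assms by (intro integrable_const_bound[where B=c]) auto
qed

lemma var_formula:
  fixes Y :: "'a \<Rightarrow> 'k \<Rightarrow> 'c::topological_space"
  assumes M: "prob_space M" and K: "prob_space K"
  and Ym[measurable]: "(\<lambda>(\<omega>,z). Y \<omega> z) \<in> borel_measurable (M \<Otimes>\<^sub>M K)"
  and B[measurable]: "B \<in> sets borel"
  defines "I \<equiv> \<lambda>\<omega> z. indicator B (Y \<omega> z) :: real"
  defines "p \<equiv> \<lambda>z. \<integral>\<omega>. I \<omega> z \<partial>M"
  shows "(\<integral>\<omega>. ((\<integral>z. I \<omega> z \<partial>K) - (\<integral>z. p z \<partial>K))\<^sup>2 \<partial>M) =
     (\<integral>\<zeta>. (\<integral>z. (\<integral>\<omega>. I \<omega> z * I \<omega> \<zeta> \<partial>M) - p z * p \<zeta> \<partial>K) \<partial>K)"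
proof -
  interpret pair_prob_space M K
    by (simp add: pair_prob_space_def pair_sigma_finite_def M K prob_space_imp_sigma_finite)
  interpret K: prob_space K by (rule K)
  interpret M: prob_space M by (rule M)
  have Im[measurable]: "(\<lambda>(\<omega>,z). I \<omega> z) \<in> borel_measurable (M \<Otimes>\<^sub>M K)"
    unfolding I_def by measurable
  have Im'[measurable]: "(\<lambda>(z,\<omega>). I \<omega> z) \<in> borel_measurable (K \<Otimes>\<^sub>M M)"
    by measurable
  have pm[measurable]: "p \<in> borel_measurable K"
    unfolding p_def by measurable
  have Ib: "\<And>\<omega> z. 0 \<le> I \<omega> z \<and> I \<omega> z \<le> 1" unfolding I_def by (auto simp: indicator_def)
  have pb: "\<And>z. 0 \<le> p z \<and> p z \<le> 1"
  proof -
    fix z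
    have "0 \<le> p z" unfolding p_def using Ib by (intro Bochner_Integration.integral_nonneg) auto
    moreover have "\<bar>p z\<bar> \<le> 1" unfolding p_def using Ib by (intro int_abs_le1[OF M]) (auto simp: abs_le_iff)
    ultimately show "0 \<le> p z \<and> p z \<le> 1" by simp
  qed
  define D where "D = (\<lambda>\<omega> z. I \<omega> z - p z)"
  have Db: "\<And>\<omega> z. \<bar>D \<omega> z\<bar> \<le> 1" unfolding D_def using Ib pb by (smt (verit))
  have DDb: "\<And>\<omega> z \<zeta>. \<bar>D \<omega> z * D \<omega> \<zeta>\<bar> \<le> 1" using Db
    by (metis abs_mult mult_le_one abs_ge_zero)
  have Dm[measurable]: "(\<lambda>(\<omega>,z). D \<omega> z) \<in> borel_measurable (M \<Otimes>\<^sub>M K)"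
    unfolding D_def by measurable
  have Iz[measurable]: "I \<omega> \<in> borel_measurable K" if "\<omega> \<in> space M" for \<omega>
    using that by measurable
  have Iw[measurable]: "(\<lambda>\<omega>. I \<omega> z) \<in> borel_measurable M" if "z \<in> space K" for z
    using that by measurable
  have step1: "((\<integral>z. I \<omega> z \<partial>K) - (\<integral>z. p z \<partial>K))\<^sup>2 = (\<integral>\<zeta>. (\<integral>z. D \<omega> z * D \<omega> \<zeta> \<partial>K) \<partial>K)"
    if "\<omega> \<in> space M" for \<omega>
  proof -
    have "(\<integral>z. I \<omega> z \<partial>K) - (\<integral>z. p z \<partial>K) = (\<integral>z. D \<omega> z \<partial>K)"
      unfolding D_def using that Ib pb
      by (intro Bochner_Integration.integral_diff[symmetric] bdd_integrable[OF K, where c=1]) (auto simp: abs_le_iff)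
    then show ?thesis
      by (simp add: power2_eq_square)
  qed
  have step2: "(\<integral>\<omega>. (\<integral>\<zeta>. (\<integral>z. D \<omega> z * D \<omega> \<zeta> \<partial>K) \<partial>K) \<partial>M) = (\<integral>\<zeta>. (\<integral>\<omega>. (\<integral>z. D \<omega> z * D \<omega> \<zeta> \<partial>K) \<partial>M) \<partial>K)"
  proof (rule Fubini_integral[symmetric])
    show "integrable (M \<Otimes>\<^sub>M K) (\<lambda>(\<omega>, \<zeta>). \<integral>z. D \<omega> z * D \<omega> \<zeta> \<partial>K)"
    proof (rule bdd_integrable[where c=1])
      show "prob_space (M \<Otimes>\<^sub>M K)" by (rule P.prob_space_axioms)
      show "(\<lambda>(\<omega>, \<zeta>). \<integral>z. D \<omega> z * D \<omega> \<zeta> \<partial>K) \<in> borel_measurable (M \<Otimes>\<^sub>M K)"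
        by measurable
      show "\<bar>(\<lambda>(\<omega>, \<zeta>). \<integral>z. D \<omega> z * D \<omega> \<zeta> \<partial>K) x\<bar> \<le> 1" for x
      proof -
        have "\<bar>\<integral>z. D (fst x) z * D (fst x) (snd x) \<partial>K\<bar> \<le> 1" by (rule int_abs_le1[OF K DDb])
        then show ?thesis by (simp only: case_prod_beta)
      qed
    qed
  qed
  have step3: "(\<integral>\<omega>. (\<integral>z. D \<omega> z * D \<omega> \<zeta> \<partial>K) \<partial>M) = (\<integral>z. (\<integral>\<omega>. D \<omega> z * D \<omega> \<zeta> \<partial>M) \<partial>K)"
    if "\<zeta> \<in> space K" for \<zeta>
  proof (rule Fubini_integral[symmetric])
    show "integrable (M \<Otimes>\<^sub>M K) (\<lambda>(\<omega>, z). D \<omega> z * D \<omega> \<zeta>)"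
    proof (rule bdd_integrable[where c=1])
      show "prob_space (M \<Otimes>\<^sub>M K)" by (rule P.prob_space_axioms)
      show "(\<lambda>(\<omega>, z). D \<omega> z * D \<omega> \<zeta>) \<in> borel_measurable (M \<Otimes>\<^sub>M K)"
        using that by measurable
      show "\<bar>(\<lambda>(\<omega>, z). D \<omega> z * D \<omega> \<zeta>) x\<bar> \<le> 1" for x
        using DDb by (auto split: prod.splits)
    qed
  qed
  have step4: "(\<integral>\<omega>. D \<omega> z * D \<omega> \<zeta> \<partial>M) = (\<integral>\<omega>. I \<omega> z * I \<omega> \<zeta> \<partial>M) - p z * p \<zeta>"
    if "z \<in> space K" "\<zeta> \<in> space K" for z \<zeta>
  proof -
    have iz: "integrable M (\<lambda>\<omega>. I \<omega> z)" and i\<zeta>: "integrable M (\<lambda>\<omega>. I \<omega> \<zeta>)"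
      using that Ib by (auto intro!: bdd_integrable[OF M, where c=1] simp: abs_le_iff)
    have izz: "integrable M (\<lambda>\<omega>. I \<omega> z * I \<omega> \<zeta>)"
      using that Ib by (intro bdd_integrable[OF M, where c=1]) (auto simp: abs_le_iff mult_le_one)
    have "(\<lambda>\<omega>. D \<omega> z * D \<omega> \<zeta>) = (\<lambda>\<omega>. (I \<omega> z * I \<omega> \<zeta> - p z * I \<omega> \<zeta>) - (p \<zeta> * I \<omega> z - p z * p \<zeta>))"
      unfolding D_def by (auto simp: algebra_simps)
    then have "(\<integral>\<omega>. D \<omega> z * D \<omega> \<zeta> \<partial>M) = ((\<integral>\<omega>. I \<omega> z * I \<omega> \<zeta> \<partial>M) - p z * p \<zeta>) - (p \<zeta> * p z - p z * p \<zeta>)"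
      using iz i\<zeta> izz by (simp add: p_def M1.prob_space)
    then show ?thesis by simp
  qed
  have "(\<integral>\<omega>. ((\<integral>z. I \<omega> z \<partial>K) - (\<integral>z. p z \<partial>K))\<^sup>2 \<partial>M) = (\<integral>\<omega>. (\<integral>\<zeta>. (\<integral>z. D \<omega> z * D \<omega> \<zeta> \<partial>K) \<partial>K) \<partial>M)"
    using step1 by (intro Bochner_Integration.integral_cong) auto
  also have "\<dots> = (\<integral>\<zeta>. (\<integral>z. (\<integral>\<omega>. D \<omega> z * D \<omega> \<zeta> \<partial>M) \<partial>K) \<partial>K)"
    using step2 step3 by (simp cong: Bochner_Integration.integral_cong)
  also have "\<dots> = (\<integral>\<zeta>. (\<integral>z. (\<integral>\<omega>. I \<omega> z * I \<omega> \<zeta> \<partial>M) - p z * p \<zeta> \<partial>K) \<partial>K)"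
    using step4 by (intro Bochner_Integration.integral_cong) auto
  finally show ?thesis .
qed



lemma ae_conv_from_var:
  fixes X :: "nat \<Rightarrow> 'a \<Rightarrow> real"
  assumes M: "prob_space M" and Xm: "\<And>n. X n \<in> borel_measurable M"
  and Xb: "\<And>n \<omega>. \<bar>X n \<omega>\<bar> \<le> 1" and cb: "\<And>n. \<bar>c n\<bar> \<le> 1"
  and S: "summable (\<lambda>n. \<integral>\<omega>. (X n \<omega> - c n)\<^sup>2 \<partial>M)"
  shows "AE \<omega> in M. (\<lambda>n. X n \<omega> - c n) \<longlonglongrightarrow> 0"
proof -
  have mf: "(\<lambda>\<omega>. ennreal ((X n \<omega> - c n)\<^sup>2)) \<in> borel_measurable M" for n
    using Xm[of n] by measurable
  have int: "integrable M (\<lambda>\<omega>. (X n \<omega> - c n)\<^sup>2)" for n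
  proof (rule bdd_integrable[OF M, where c=4])
    show "(\<lambda>\<omega>. (X n \<omega> - c n)\<^sup>2) \<in> borel_measurable M" using Xm[of n] by measurable
    show "\<bar>(X n \<omega> - c n)\<^sup>2\<bar> \<le> 4" for \<omega>
    proof -
      have "\<bar>X n \<omega> - c n\<bar> \<le> 2" using Xb[of n \<omega>] cb[of n] by linarith
      then have "\<bar>X n \<omega> - c n\<bar>\<^sup>2 \<le> 2\<^sup>2" by (intro power_mono) auto
      then show ?thesis by simp
    qed
  qed
  have "(\<integral>\<^sup>+\<omega>. (\<Sum>n. ennreal ((X n \<omega> - c n)\<^sup>2)) \<partial>M) = (\<Sum>n. \<integral>\<^sup>+\<omega>. ennreal ((X n \<omega> - c n)\<^sup>2) \<partial>M)"
    by (rule nn_integral_suminf[OF mf])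
  also have "\<dots> = (\<Sum>n. ennreal (\<integral>\<omega>. (X n \<omega> - c n)\<^sup>2 \<partial>M))"
    using int by (subst nn_integral_eq_integral) auto
  also have "\<dots> = ennreal (\<Sum>n. \<integral>\<omega>. (X n \<omega> - c n)\<^sup>2 \<partial>M)"
    using S by (intro suminf_ennreal2) auto
  finally have fin: "(\<integral>\<^sup>+\<omega>. (\<Sum>n. ennreal ((X n \<omega> - c n)\<^sup>2)) \<partial>M) \<noteq> \<infinity>" by simp
  have "AE \<omega> in M. (\<Sum>n. ennreal ((X n \<omega> - c n)\<^sup>2)) \<noteq> \<infinity>"
    using mf fin by (intro nn_integral_PInf_AE) auto
  then show ?thesis
  proof (rule AE_mp, intro AE_I2 impI)
    fix \<omega> assume "(\<Sum>n. ennreal ((X n \<omega> - c n)\<^sup>2)) \<noteq> \<infinity>"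
    then have "summable (\<lambda>n. (X n \<omega> - c n)\<^sup>2)"
      by (intro summable_suminf_not_top) auto
    then have "(\<lambda>n. (X n \<omega> - c n)\<^sup>2) \<longlonglongrightarrow> 0" by (rule summable_LIMSEQ_zero)
    then have "(\<lambda>n. sqrt ((X n \<omega> - c n)\<^sup>2)) \<longlonglongrightarrow> sqrt 0" by (rule tendsto_real_sqrt)
    then have "(\<lambda>n. \<bar>X n \<omega> - c n\<bar>) \<longlonglongrightarrow> 0" by simp
    then show "(\<lambda>n. X n \<omega> - c n) \<longlonglongrightarrow> 0" by (simp add: tendsto_rabs_zero_iff)
  qed
qed



lemma portmanteau_closed:
  fixes Ns :: "nat \<Rightarrow> 'b::euclidean_space measure" and N :: "'b measure"
  assumes Ns: "\<And>n. prob_space (Ns n)" "\<And>n. sets (Ns n) = sets borel"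
  and N: "prob_space N" "sets N = sets borel"
  and W: "weak_conv_e Ns N" and F: "closed F" and e: "e > 0"
  shows "\<forall>\<^sub>F n in sequentially. measure (Ns n) F \<le> measure N F + e"
proof (cases "F = {}")
  case True then show ?thesis using e by simp
next
  case Fne: False
  interpret N: prob_space N by (rule N(1))
  define f where "f = (\<lambda>k::nat. \<lambda>x. max 0 (1 - real (Suc k) * infdist x F))"
  have fc: "continuous_on UNIV (f k)" for k
    unfolding f_def by (intro continuous_intros)
  have f01: "0 \<le> f k x \<and> f k x \<le> 1" for k x
    unfolding f_def using infdist_nonneg[of x F] by auto
  have fb: "bounded (range (f k))" for k
    using f01 by (intro boundedI[where B=1]) (smt (verit) imageE real_norm_def)
  have fmb: "f k \<in> borel_measurable borel" for k by (rule borel_measurable_continuous_onI[OF fc])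
  have Fb: "F \<in> sets borel" using F by simp
  have find: "indicator F x \<le> f k x" for k x
  proof (cases "x \<in> F")
    case True then have "infdist x F = 0" using in_closed_iff_infdist_zero[OF F Fne] by simp
    then show ?thesis using True by (simp add: f_def)
  qed (use f01 in auto)
  have flim: "(\<lambda>k. f k x) \<longlonglongrightarrow> indicator F x" for x
  proof (cases "x \<in> F")
    case True then have "infdist x F = 0" using in_closed_iff_infdist_zero[OF F Fne] by simp
    then show ?thesis using True by (simp add: f_def)
  next
    case False
    then have d: "infdist x F > 0" using in_closed_iff_infdist_zero[OF F Fne] infdist_nonneg[of x F] by simp
    obtain k0 :: nat where "1 / infdist x F < real k0" using reals_Archimedean2 by blast
    then have "\<forall>k\<ge>k0. f k x = 0"
    proof (intro allI impI)
      fix k assume "1 / infdist x F < real k0" "k0 \<le> k"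
      then have "1 < real k0 * infdist x F" using d by (simp add: field_simps)
      moreover have "real k0 * infdist x F \<le> real (Suc k) * infdist x F"
        using d \<open>k0 \<le> k\<close> by (intro mult_right_mono) auto
      ultimately have "1 < real (Suc k) * infdist x F" by linarith
      then show "f k x = 0" by (simp add: f_def)
    qed
    then have "eventually (\<lambda>k. f k x = 0) sequentially" by (auto simp: eventually_sequentially)
    then have "(\<lambda>k. f k x) \<longlonglongrightarrow> 0" by (rule tendsto_eventually)
    then show ?thesis using False by simp
  qed
  have mN: "measurable N borel = measurable borel borel" by (rule measurable_cong_sets[OF N(2) refl])
  have "(\<lambda>k. integral\<^sup>L N (f k)) \<longlonglongrightarrow> integral\<^sup>L N (indicator F)"
  proof (rule integral_dominated_convergence[where w="\<lambda>_. 1"])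
    show "indicator F \<in> borel_measurable N" unfolding mN by (rule borel_measurable_indicator[OF Fb])
    show "\<And>k. f k \<in> borel_measurable N" unfolding mN by (rule fmb)
    show "integrable N (\<lambda>_. 1::real)" by simp
    show "AE x in N. (\<lambda>k. f k x) \<longlonglongrightarrow> indicator F x" using flim by simp
    show "\<And>k. AE x in N. norm (f k x) \<le> 1" using f01 by (simp add: abs_le_iff)
  qed
  moreover have "integral\<^sup>L N (indicator F) = measure N F"
    using Fb N(2) by simp
  ultimately have "(\<lambda>k. integral\<^sup>L N (f k)) \<longlonglongrightarrow> measure N F" by simp
  then have "eventually (\<lambda>k. integral\<^sup>L N (f k) < measure N F + e/2) sequentially"
    using e by (intro order_tendstoD) auto
  then obtain k where k: "integral\<^sup>L N (f k) < measure N F + e/2"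
    by (auto simp: eventually_sequentially)
  have "(\<lambda>n. integral\<^sup>L (Ns n) (f k)) \<longlonglongrightarrow> integral\<^sup>L N (f k)"
    using W fc fb unfolding weak_conv_e_def by blast
  then have "eventually (\<lambda>n. integral\<^sup>L (Ns n) (f k) < integral\<^sup>L N (f k) + e/2) sequentially"
    using e by (intro order_tendstoD) auto
  then show ?thesis
  proof (rule eventually_mono)
    fix n assume a: "integral\<^sup>L (Ns n) (f k) < integral\<^sup>L N (f k) + e/2"
    interpret Nn: prob_space "Ns n" by (rule Ns(1))
    have mNn: "measurable (Ns n) borel = measurable borel borel" by (rule measurable_cong_sets[OF Ns(2) refl])
    have "measure (Ns n) F = integral\<^sup>L (Ns n) (indicator F)"
      using Fb Ns(2)[of n] by simp
    also have "\<dots> \<le> integral\<^sup>L (Ns n) (f k)"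
    proof (rule integral_mono)
      show "integrable (Ns n) (indicator F :: _ \<Rightarrow> real)"
        using Fb Ns(2)[of n] by (intro integrable_real_indicator) (auto simp: Nn.emeasure_eq_measure)
      show "integrable (Ns n) (f k)"
        using f01 by (intro Nn.integrable_const_bound[where B=1]) (auto simp: abs_le_iff mNn fmb)
    qed (rule find)
    finally show "measure (Ns n) F \<le> measure N F + e" using a k by simp
  qed
qed

lemma portmanteau:
  fixes Ns :: "nat \<Rightarrow> 'b::euclidean_space measure" and N :: "'b measure"
  assumes Ns: "\<And>n. prob_space (Ns n)" "\<And>n. sets (Ns n) = sets borel"
  and N: "prob_space N" "sets N = sets borel"
  and W: "weak_conv_e Ns N" and B: "B \<in> sets borel" and fr: "measure N (frontier B) = 0"
  shows "(\<lambda>n. measure (Ns n) B) \<longlonglongrightarrow> measure N B"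
proof (rule tendstoI)
  fix e :: real assume e: "0 < e"
  interpret N: prob_space N by (rule N(1))
  have sN: "space N = UNIV" using sets_eq_imp_space_eq[OF N(2)] by simp
  have cl: "measure N (closure B) \<le> measure N B"
  proof -
    have "closure B \<subseteq> B \<union> frontier B" by (auto simp: frontier_def dest: interior_subset[THEN subsetD])
    then have "measure N (closure B) \<le> measure N (B \<union> frontier B)"
      using B N(2) by (intro N.finite_measure_mono) auto
    also have "\<dots> \<le> measure N B + measure N (frontier B)"
      using B N(2) by (intro measure_Un_le) auto
    finally show ?thesis using fr by simp
  qed
  have int: "measure N B \<le> measure N (interior B)"
  proof -
    have "B \<subseteq> interior B \<union> frontier B" by (auto simp: frontier_def dest: closure_subset[THEN subsetD])
    then have "measure N B \<le> measure N (interior B \<union> frontier B)"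
      using B N(2) by (intro N.finite_measure_mono) auto
    also have "\<dots> \<le> measure N (interior B) + measure N (frontier B)"
      using B N(2) by (intro measure_Un_le) auto
    finally show ?thesis using fr by simp
  qed
  have e1: "\<forall>\<^sub>F n in sequentially. measure (Ns n) (closure B) \<le> measure N (closure B) + e/2"
    using e by (intro portmanteau_closed[OF Ns N W]) auto
  have e2: "\<forall>\<^sub>F n in sequentially. measure (Ns n) (- interior B) \<le> measure N (- interior B) + e/2"
    using e by (intro portmanteau_closed[OF Ns N W]) auto
  show "\<forall>\<^sub>F n in sequentially. dist (measure (Ns n) B) (measure N B) < e"
    using e1 e2
  proof eventually_elim
    case (elim n)
    interpret Nn: prob_space "Ns n" by (rule Ns(1))
    have sNn: "space (Ns n) = UNIV" using sets_eq_imp_space_eq[OF Ns(2)[of n]] by simp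
    have a: "measure (Ns n) B \<le> measure (Ns n) (closure B)"
      using B Ns(2)[of n] by (intro Nn.finite_measure_mono) (auto simp: closure_subset)
    have b: "measure (Ns n) (interior B) \<le> measure (Ns n) B"
      using B Ns(2)[of n] by (intro Nn.finite_measure_mono) (auto simp: interior_subset)
    have c1: "measure (Ns n) (- interior B) = 1 - measure (Ns n) (interior B)"
      using Nn.prob_compl[of "interior B"] Ns(2)[of n] sNn by (simp add: Compl_eq_Diff_UNIV)
    have c2: "measure N (- interior B) = 1 - measure N (interior B)"
      using N.prob_compl[of "interior B"] N(2) sN by (simp add: Compl_eq_Diff_UNIV)
    show ?case using elim a b c1 c2 cl int e by (simp add: dist_real_def abs_less_iff)
  qed
qed



lemma unit_cube_cbox: "(unit_cube :: (real^'d) set) = cbox 0 (vec 1)"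
  unfolding unit_cube_def by (auto simp: mem_box_cart)

lemma unit_cube_sets[measurable]: "(unit_cube :: (real^'d) set) \<in> sets borel"
  unfolding unit_cube_cbox by simp

lemma emeasure_unit_cube: "emeasure lborel (unit_cube :: (real^'d) set) = 1"
proof -
  have "(\<Prod>b\<in>Basis. ((vec 1 :: real^'d) - 0) \<bullet> b) = 1"
    by (intro prod.neutral) (auto simp: Basis_vec_def inner_axis)
  then show ?thesis unfolding unit_cube_cbox by (simp add: emeasure_lborel_cbox_eq Basis_vec_def inner_axis)
qed

lemma prob_space_K: "prob_space (restrict_space lborel (unit_cube :: (real^'d) set))"
  by (rule prob_spaceI) (simp add: space_restrict_space emeasure_restrict_space emeasure_unit_cube)

lemma space_K: "space (restrict_space lborel (unit_cube :: (real^'d) set)) = unit_cube"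
  by (simp add: space_restrict_space)



lemma mixture_props:
  fixes mu :: "real^'d \<Rightarrow> (real^'d) measure"
  assumes smu: "\<And>z. sets (mu z) = sets borel"
  and AEp: "AE z in lborel. z \<in> unit_cube \<longrightarrow> prob_space (mu z)"
  and mm: "\<And>B. B \<in> sets borel \<Longrightarrow> (\<lambda>z. emeasure (mu z) B) \<in> borel_measurable (restrict_space lborel unit_cube)"
  shows "sets (mixture mu) = sets borel"
    and "\<And>B. B \<in> sets borel \<Longrightarrow> emeasure (mixture mu) B = (\<integral>\<^sup>+z. emeasure (mu z) B \<partial>restrict_space lborel unit_cube)"
    and "prob_space (mixture mu)"
proof -
  define \<nu> where "\<nu> = (\<lambda>B. \<integral>\<^sup>+ z. indicator unit_cube z * emeasure (mu z) B \<partial>lborel)"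
  have mm': "(\<lambda>z. indicator unit_cube z * emeasure (mu z) B) \<in> borel_measurable lborel" if "B \<in> sets borel" for B
    using mm[OF that] borel_measurable_restrict_space_iff_ennreal[of unit_cube lborel "\<lambda>z. emeasure (mu z) B"]
    by (simp add: mult.commute)
  have nu_eq: "\<nu> B = (\<integral>\<^sup>+z. emeasure (mu z) B \<partial>restrict_space lborel unit_cube)" for B
    unfolding \<nu>_def by (subst nn_integral_restrict_space) (auto simp: mult.commute)
  have sa: "sigma_algebra UNIV (sets (borel :: (real^'d) measure))"
    using sets.sigma_algebra_axioms[of "borel :: (real^'d) measure"] by simp
  have pos: "positive (sets borel) \<nu>"
    unfolding positive_def \<nu>_def by simp
  have ca: "countably_additive (sets borel) \<nu>"
    unfolding countably_additive_def
  proof (intro allI impI)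
    fix A :: "nat \<Rightarrow> (real^'d) set"
    assume A: "range A \<subseteq> sets borel" "disjoint_family A" "\<Union> (range A) \<in> sets borel"
    have "(\<Sum>i. \<nu> (A i)) = (\<integral>\<^sup>+ z. (\<Sum>i. indicator unit_cube z * emeasure (mu z) (A i)) \<partial>lborel)"
      unfolding \<nu>_def using A by (intro nn_integral_suminf[symmetric] mm') auto
    also have "\<dots> = \<nu> (\<Union> (range A))"
      unfolding \<nu>_def
    proof (intro nn_integral_cong)
      fix z
      have "(\<Sum>i. emeasure (mu z) (A i)) = emeasure (mu z) (\<Union> (range A))"
        using A smu[of z] by (intro suminf_emeasure) auto
      then show "(\<Sum>i. indicator unit_cube z * emeasure (mu z) (A i)) = indicator unit_cube z * emeasure (mu z) (\<Union> (range A))"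
        by simp
    qed
    finally show "(\<Sum>i. \<nu> (A i)) = \<nu> (\<Union> (range A))" .
  qed
  have mix: "mixture mu = measure_of UNIV (sets borel) \<nu>"
    unfolding mixture_def \<nu>_def ..
  show ss: "sets (mixture mu) = sets borel"
    unfolding mix using sigma_algebra.sigma_sets_eq[OF sa] by (simp add: sets_measure_of_conv)
  have em: "emeasure (mixture mu) B = \<nu> B" if "B \<in> sets borel" for B
    unfolding mix by (rule emeasure_measure_of_sigma[OF sa pos ca that])
  show "\<And>B. B \<in> sets borel \<Longrightarrow> emeasure (mixture mu) B = (\<integral>\<^sup>+z. emeasure (mu z) B \<partial>restrict_space lborel unit_cube)"
    using em nu_eq by simp
  have sp: "space (mixture mu) = UNIV" using sets_eq_imp_space_eq[OF ss] by simp
  have ae: "AE z in lborel. indicator unit_cube z * emeasure (mu z) UNIV = indicator unit_cube z"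
    using AEp
  proof (rule AE_mp, intro AE_I2 impI)
    fix z assume "z \<in> unit_cube \<longrightarrow> prob_space (mu z)"
    moreover have "space (mu z) = UNIV" using sets_eq_imp_space_eq[OF smu[of z]] by simp
    ultimately show "indicator unit_cube z * emeasure (mu z) UNIV = indicator unit_cube z"
      by (cases "z \<in> unit_cube") (auto dest: prob_space.emeasure_space_1)
  qed
  have "\<nu> UNIV = (\<integral>\<^sup>+ z. indicator (unit_cube :: (real^'d) set) z \<partial>lborel)"
    unfolding \<nu>_def using nn_integral_cong_AE[OF ae] by simp
  also have "\<dots> = 1" by (simp add: emeasure_unit_cube)
  finally show "prob_space (mixture mu)"
    by (intro prob_spaceI) (simp add: sp em)
qed



theorem mainTheorem7:
  fixes M :: "'a measure"
    and Y :: "nat \<Rightarrow> 'a \<Rightarrow> real^'d \<Rightarrow> real^'d"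
    and mu :: "real^'d \<Rightarrow> (real^'d) measure"
    and C :: "(real^'d) set set"
    and \<sigma> :: "nat \<Rightarrow> nat"
  assumes "prob_space M"
    and "\<And>n. (\<lambda>(\<omega>, z). Y n \<omega> z) \<in> borel_measurable (M \<Otimes>\<^sub>M restrict_space lborel unit_cube)"
    and "\<And>z. sets (mu z) = sets borel"
    and "AE z in lborel. z \<in> unit_cube \<longrightarrow> prob_space (mu z) \<and>
           weak_conv_e (\<lambda>n. distr M borel (\<lambda>\<omega>. Y n \<omega> z)) (mu z)"
    and "\<And>B. B \<in> sets borel \<Longrightarrow>
           (\<lambda>z. emeasure (mu z) B) \<in> borel_measurable (restrict_space lborel unit_cube)"
    and "countable C" and "convergence_determining C"
    and "strict_mono \<sigma>"
    and "\<And>B. B \<in> C \<Longrightarrow> measure (mixture mu) (frontier B) = 0 \<Longrightarrow>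
           summable (\<lambda>n. LINT \<zeta>:unit_cube|lborel. LINT z:unit_cube|lborel.
                          ind_cov M (Y (\<sigma> n)) B z \<zeta>)"
  shows "AE \<omega> in M. weak_conv_e (\<lambda>n. occupation (Y (\<sigma> n) \<omega>)) (mixture mu)"
proof -
  note Mp = assms(1)
  interpret M: prob_space M by (rule Mp)
  define K where "K = restrict_space lborel (unit_cube :: (real^'d) set)"
  have Kp: "prob_space K" unfolding K_def by (rule prob_space_K)
  interpret K: prob_space K by (rule Kp)
  have sK: "space K = unit_cube" unfolding K_def by (rule space_K)
  have cs: "unit_cube \<inter> space lborel \<in> sets (lborel :: (real^'d) measure)" by simp
  have Ym[measurable]: "(\<lambda>(\<omega>, z). Y n \<omega> z) \<in> borel_measurable (M \<Otimes>\<^sub>M K)" for n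
    unfolding K_def by (rule assms(2))
  have Yw[measurable]: "Y n \<omega> \<in> borel_measurable K" if "\<omega> \<in> space M" for n \<omega>
    using that by measurable
  have Yz[measurable]: "(\<lambda>\<omega>. Y n \<omega> z) \<in> borel_measurable M" if "z \<in> space K" for n z
    using that by measurable
  define mix where "mix = mixture mu"
  have mmu: "\<And>B. B \<in> sets borel \<Longrightarrow> (\<lambda>z. emeasure (mu z) B) \<in> borel_measurable K"
    unfolding K_def by (rule assms(5))
  have AEp: "AE z in lborel. z \<in> unit_cube \<longrightarrow> prob_space (mu z)"
    using assms(4) by eventually_elim auto
  have mixs: "sets mix = sets borel" and mixe: "\<And>B. B \<in> sets borel \<Longrightarrow> emeasure mix B = (\<integral>\<^sup>+z. emeasure (mu z) B \<partial>K)"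
    and mixp: "prob_space mix"
    using mixture_props[OF assms(3) AEp assms(5)] unfolding mix_def K_def by auto
  interpret mix: prob_space mix by (rule mixp)
  have AEK: "AE z in K. prob_space (mu z) \<and> weak_conv_e (\<lambda>n. distr M borel (\<lambda>\<omega>. Y n \<omega> z)) (mu z)"
    unfolding K_def AE_restrict_space_iff[OF cs] by (rule assms(4))
  have Cb: "C \<subseteq> sets borel" using assms(7) unfolding convergence_determining_def by blast
  have occ: "prob_space (occupation (Y n \<omega>)) \<and> sets (occupation (Y n \<omega>)) = sets borel" if "\<omega> \<in> space M" for n \<omega>
  proof
    show "prob_space (occupation (Y n \<omega>))" unfolding occupation_def K_def[symmetric]
      by (rule K.prob_space_distr[OF Yw[OF that]])
    show "sets (occupation (Y n \<omega>)) = sets borel" unfolding occupation_def by (rule sets_distr)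
  qed
  have key: "AE \<omega> in M. (\<lambda>n. measure (occupation (Y (\<sigma> n) \<omega>)) B) \<longlonglongrightarrow> measure mix B"
    if B: "B \<in> C" "measure mix (frontier B) = 0" for B
  proof -
    have Bb[measurable]: "B \<in> sets borel" using B Cb by auto
    define I where "I = (\<lambda>n \<omega> z. indicator B (Y n \<omega> z) :: real)"
    define P where "P = (\<lambda>n z. \<integral>\<omega>. I n \<omega> z \<partial>M)"
    define X where "X = (\<lambda>n \<omega>. \<integral>z. I n \<omega> z \<partial>K)"
    define c where "c = (\<lambda>n. \<integral>z. P n z \<partial>K)"
    have Im[measurable]: "(\<lambda>(\<omega>,z). I n \<omega> z) \<in> borel_measurable (M \<Otimes>\<^sub>M K)" for n
      unfolding I_def by measurable
    have Im'[measurable]: "(\<lambda>(z,\<omega>). I n \<omega> z) \<in> borel_measurable (K \<Otimes>\<^sub>M M)" for n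
      by measurable
    have Pm[measurable]: "P n \<in> borel_measurable K" for n
      unfolding P_def by measurable
    have Xm[measurable]: "X n \<in> borel_measurable M" for n
      unfolding X_def by measurable
    have I01: "\<bar>I n \<omega> z\<bar> \<le> 1" for n \<omega> z unfolding I_def by (auto simp: indicator_def)
    have Pb: "\<bar>P n z\<bar> \<le> 1" for n z unfolding P_def by (rule int_abs_le1[OF Mp I01])
    have Xb: "\<bar>X n \<omega>\<bar> \<le> 1" for n \<omega> unfolding X_def by (rule int_abs_le1[OF Kp I01])
    have cb: "\<bar>c n\<bar> \<le> 1" for n unfolding c_def by (rule int_abs_le1[OF Kp Pb])
    have Xocc: "measure (occupation (Y n \<omega>)) B = X n \<omega>" if "\<omega> \<in> space M" for n \<omega>
    proof -
      have "measure (occupation (Y n \<omega>)) B = measure K (Y n \<omega> -` B \<inter> space K)"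
        unfolding occupation_def K_def[symmetric] using that by (intro measure_distr) auto
      also have "\<dots> = (\<integral>z. indicator (Y n \<omega> -` B \<inter> space K) z \<partial>K)" by simp
      also have "\<dots> = X n \<omega>" unfolding X_def I_def
        by (intro Bochner_Integration.integral_cong) (auto simp: indicator_def)
      finally show ?thesis .
    qed
    have Pmeas: "P n z = measure M {\<omega>\<in>space M. Y n \<omega> z \<in> B}" for n z
    proof -
      have "P n z = (\<integral>\<omega>. indicator {\<omega>\<in>space M. Y n \<omega> z \<in> B} \<omega> \<partial>M)" unfolding P_def I_def
        by (intro Bochner_Integration.integral_cong) (auto simp: indicator_def)
      also have "\<dots> = measure M ({\<omega>\<in>space M. Y n \<omega> z \<in> B} \<inter> space M)" by (rule Bochner_Integration.integral_indicator)
      also have "{\<omega>\<in>space M. Y n \<omega> z \<in> B} \<inter> space M = {\<omega>\<in>space M. Y n \<omega> z \<in> B}" by blast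
      finally show ?thesis .
    qed
    have IImeas: "(\<integral>\<omega>. I n \<omega> z * I n \<omega> \<zeta> \<partial>M) = measure M {\<omega>\<in>space M. Y n \<omega> z \<in> B \<and> Y n \<omega> \<zeta> \<in> B}" for n z \<zeta>
    proof -
      have "(\<integral>\<omega>. I n \<omega> z * I n \<omega> \<zeta> \<partial>M) = (\<integral>\<omega>. indicator {\<omega>\<in>space M. Y n \<omega> z \<in> B \<and> Y n \<omega> \<zeta> \<in> B} \<omega> \<partial>M)" unfolding I_def
        by (intro Bochner_Integration.integral_cong) (auto simp: indicator_def)
      also have "\<dots> = measure M ({\<omega>\<in>space M. Y n \<omega> z \<in> B \<and> Y n \<omega> \<zeta> \<in> B} \<inter> space M)" by (rule Bochner_Integration.integral_indicator)
      also have "{\<omega>\<in>space M. Y n \<omega> z \<in> B \<and> Y n \<omega> \<zeta> \<in> B} \<inter> space M = {\<omega>\<in>space M. Y n \<omega> z \<in> B \<and> Y n \<omega> \<zeta> \<in> B}" by blast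
      finally show ?thesis .
    qed
    have var: "(\<integral>\<omega>. (X n \<omega> - c n)\<^sup>2 \<partial>M) = (LINT \<zeta>:unit_cube|lborel. LINT z:unit_cube|lborel. ind_cov M (Y n) B z \<zeta>)" for n
    proof -
      have "(\<integral>\<omega>. (X n \<omega> - c n)\<^sup>2 \<partial>M) = (\<integral>\<zeta>. (\<integral>z. (\<integral>\<omega>. I n \<omega> z * I n \<omega> \<zeta> \<partial>M) - P n z * P n \<zeta> \<partial>K) \<partial>K)"
        unfolding X_def c_def P_def I_def by (rule var_formula[OF Mp Kp Ym Bb])
      also have "\<dots> = (\<integral>\<zeta>. (\<integral>z. ind_cov M (Y n) B z \<zeta> \<partial>K) \<partial>K)"
        unfolding ind_cov_def IImeas Pmeas ..
      also have "\<dots> = (LINT \<zeta>:unit_cube|lborel. LINT z:unit_cube|lborel. ind_cov M (Y n) B z \<zeta>)"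
        unfolding K_def integral_restrict_space[OF cs] set_lebesgue_integral_def ..
      finally show ?thesis .
    qed
    have fr0: "AE z in K. emeasure (mu z) (frontier B) = 0"
    proof -
      have frb: "frontier B \<in> sets borel" by simp
      have "emeasure mix (frontier B) = 0"
        using B(2) mixs by (simp add: mix.emeasure_eq_measure)
      then have "(\<integral>\<^sup>+z. emeasure (mu z) (frontier B) \<partial>K) = 0" using mixe[OF frb] by simp
      then show ?thesis using nn_integral_0_iff_AE[OF mmu[OF frb]] by simp
    qed
    have limP: "AE z in K. (\<lambda>n. P n z) \<longlonglongrightarrow> measure (mu z) B"
      using AEK fr0 AE_space
    proof eventually_elim
      case (elim z)
      have pd: "prob_space (distr M borel (\<lambda>\<omega>. Y n \<omega> z))" for n
        by (rule M.prob_space_distr[OF Yz[OF elim(3)]])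
      have "(\<lambda>n. measure (distr M borel (\<lambda>\<omega>. Y n \<omega> z)) B) \<longlonglongrightarrow> measure (mu z) B"
      proof (rule portmanteau)
        show "prob_space (distr M borel (\<lambda>\<omega>. Y n \<omega> z))" for n by (rule pd)
        show "sets (distr M borel (\<lambda>\<omega>. Y n \<omega> z)) = sets borel" for n by simp
        show "prob_space (mu z)" using elim by simp
        show "sets (mu z) = sets borel" by (rule assms(3))
        show "weak_conv_e (\<lambda>n. distr M borel (\<lambda>\<omega>. Y n \<omega> z)) (mu z)" using elim by simp
        show "B \<in> sets borel" by (rule Bb)
        show "measure (mu z) (frontier B) = 0" using elim by (simp add: measure_def)
      qed
      moreover have "measure (distr M borel (\<lambda>\<omega>. Y n \<omega> z)) B = P n z" for n
      proof -
        have "measure (distr M borel (\<lambda>\<omega>. Y n \<omega> z)) B = measure M ((\<lambda>\<omega>. Y n \<omega> z) -` B \<inter> space M)"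
          by (rule measure_distr[OF Yz[OF elim(3)] Bb]) 
        also have "(\<lambda>\<omega>. Y n \<omega> z) -` B \<inter> space M = {\<omega>\<in>space M. Y n \<omega> z \<in> B}" by blast
        finally show ?thesis using Pmeas by simp
      qed
      ultimately show ?case by simp
    qed
    have mub: "AE z in K. \<bar>measure (mu z) B\<bar> \<le> 1"
      using AEK
    proof eventually_elim
      case (elim z)
      then interpret pz: prob_space "mu z" by simp
      show ?case by simp
    qed
    have mum[measurable]: "(\<lambda>z. measure (mu z) B) \<in> borel_measurable K"
      unfolding measure_def using mmu[OF Bb] by measurable
    have conv_c: "c \<longlonglongrightarrow> (\<integral>z. measure (mu z) B \<partial>K)"
      unfolding c_def
    proof (rule integral_dominated_convergence[where w="\<lambda>_. 1"])
      show "AE z in K. (\<lambda>n. P n z) \<longlonglongrightarrow> measure (mu z) B" by (rule limP)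
      show "AE z in K. norm (P n z) \<le> 1" for n using Pb by simp
    qed auto
    have "(\<integral>\<^sup>+z. emeasure (mu z) B \<partial>K) = (\<integral>\<^sup>+z. ennreal (measure (mu z) B) \<partial>K)"
      using AEK
    proof (intro nn_integral_cong_AE, eventually_elim)
      case (elim z)
      then interpret pz: prob_space "mu z" by simp
      show ?case by (simp add: pz.emeasure_eq_measure)
    qed
    also have "\<dots> = ennreal (\<integral>z. measure (mu z) B \<partial>K)"
      using mub by (intro nn_integral_eq_integral K.integrable_const_bound[where B=1]) auto
    finally have "emeasure mix B = ennreal (\<integral>z. measure (mu z) B \<partial>K)" using mixe[OF Bb] by simp
    then have mixB: "measure mix B = (\<integral>z. measure (mu z) B \<partial>K)"
      by (simp add: mix.emeasure_eq_measure)
    have "AE \<omega> in M. (\<lambda>n. X (\<sigma> n) \<omega> - c (\<sigma> n)) \<longlonglongrightarrow> 0"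
    proof (rule ae_conv_from_var[OF Mp])
      show "summable (\<lambda>n. \<integral>\<omega>. (X (\<sigma> n) \<omega> - c (\<sigma> n))\<^sup>2 \<partial>M)"
        unfolding var using assms(9)[OF B(1) B(2)[unfolded mix_def]] by simp
    qed (auto simp: Xb cb)
    then show ?thesis
      using AE_space
    proof eventually_elim
      case (elim \<omega>)
      have "(c \<circ> \<sigma>) \<longlonglongrightarrow> measure mix B" using LIMSEQ_subseq_LIMSEQ[OF conv_c assms(8)] mixB by simp
      then have "(\<lambda>n. (X (\<sigma> n) \<omega> - c (\<sigma> n)) + c (\<sigma> n)) \<longlonglongrightarrow> 0 + measure mix B"
        using elim(1) by (intro tendsto_add) (auto simp: comp_def)
      then show ?case using Xocc[OF elim(2)] by simp
    qed
  qed
  let ?C' = "{B\<in>C. measure mix (frontier B) = 0}"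
  have cC: "countable ?C'" using assms(6) by (rule countable_subset[rotated]) auto
  have "AE \<omega> in M. \<forall>B\<in>?C'. (\<lambda>n. measure (occupation (Y (\<sigma> n) \<omega>)) B) \<longlonglongrightarrow> measure mix B"
    using key by (subst AE_ball_countable[OF cC]) auto
  then show ?thesis
    using AE_space
  proof eventually_elim
    case (elim \<omega>)
    have "weak_conv_e (\<lambda>n. occupation (Y (\<sigma> n) \<omega>)) mix"
      using assms(7) unfolding convergence_determining_def
    proof (elim conjE allE impE)
      show "(\<forall>n. prob_space (occupation (Y (\<sigma> n) \<omega>)) \<and> sets (occupation (Y (\<sigma> n) \<omega>)) = sets borel) \<and>
        prob_space mix \<and> sets mix = sets borel \<and>
        (\<forall>B\<in>C. measure mix (frontier B) = 0 \<longrightarrow> (\<lambda>n. measure (occupation (Y (\<sigma> n) \<omega>)) B) \<longlonglongrightarrow> measure mix B)"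
        using occ[OF elim(2)] mixp mixs elim(1) by auto
    qed
    then show ?case by (simp add: mix_def)
  qed
qed

end
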